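(* For every probability distribution on inputs of length $n$, every $p\in[0,1]$ and every $k\ge1$, there is a deterministic algorithm for Locate (which may depend on the distribution) that runs in $k$ rounds, asks at most $k\lceil pn\rceil^{1/k}$ queries, and succeeds with probability at least $p$ when the input is drawn from that distribution.
   Context: Locate problem in the rank query model: there is a vector $\vec{x}=(x_1,\ldots,x_n)$ whose ranks form a permutation of $\{1,\ldots,n\}$; an index $i$ is given and the goal is to output $\mathrm{rank}(x_i)$. Queries have the form "How is $\mathrm{rank}(x_j)$ compared to $m$?", with answer "$<$", "$=$" or "$>$". An algorithm runs in $k$ rounds if in each of $k$ rounds it submits a set of queries chosen depending only on answers of earlier rounds, then receives all answers. An input distribution is a distribution over rank permutations. *)

theory Defs
  imports "HOL-Probability.Probability"
begin

text \<open>Rank query model. An input of length n is given by its rank permutation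
  sigma, where sigma j = rank(x_j) for j in {1..n}; sigma permutes {1..n}.
  A query (j, m) asks how rank(x_j) compares to m.\<close>

datatype answer = Lt | Eq | Gt

definition cmp :: "nat \<Rightarrow> nat \<Rightarrow> answer" where
  "cmp a m = (if a < m then Lt else if a = m then Eq else Gt)"

text \<open>Answers of one round to the query set Q (unasked queries get a fixed dummy value).\<close>
definition round_answers :: "(nat \<Rightarrow> nat) \<Rightarrow> (nat \<times> nat) set \<Rightarrow> (nat \<times> nat \<Rightarrow> answer)" where
  "round_answers \<sigma> Q = (\<lambda>q. if q \<in> Q then cmp (\<sigma> (fst q)) (snd q) else Eq)"

text \<open>A deterministic round-based algorithm: the query set of a round is a function of
  the answers of all earlier rounds (the history); the output is a function of the
  full history.\<close>
record algorithm =
  queries :: "(nat \<times> nat \<Rightarrow> answer) list \<Rightarrow> (nat \<times> nat) set"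
  answer_of :: "(nat \<times> nat \<Rightarrow> answer) list \<Rightarrow> nat"

fun history :: "algorithm \<Rightarrow> (nat \<Rightarrow> nat) \<Rightarrow> nat \<Rightarrow> (nat \<times> nat \<Rightarrow> answer) list" where
  "history A \<sigma> 0 = []"
| "history A \<sigma> (Suc r) =
     (let h = history A \<sigma> r in h @ [round_answers \<sigma> (queries A h)])"

definition round_queries :: "algorithm \<Rightarrow> (nat \<Rightarrow> nat) \<Rightarrow> nat \<Rightarrow> (nat \<times> nat) set" where
  "round_queries A \<sigma> r = queries A (history A \<sigma> r)"

definition num_queries :: "algorithm \<Rightarrow> nat \<Rightarrow> (nat \<Rightarrow> nat) \<Rightarrow> nat" where
  "num_queries A k \<sigma> = (\<Sum>r<k. card (round_queries A \<sigma> r))"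

definition run_output :: "algorithm \<Rightarrow> nat \<Rightarrow> (nat \<Rightarrow> nat) \<Rightarrow> nat" where
  "run_output A k \<sigma> = answer_of A (history A \<sigma> k)"

end

theory Submission
  imports Defs
begin

lemma exists_heavy:
  fixes f :: "'a \<Rightarrow> real"
  assumes "finite U" "card U = N" "m \<le> N" "\<forall>x\<in>U. f x \<ge> 0"
  shows "\<exists>S\<subseteq>U. card S = m \<and> real N * sum f S \<ge> real m * sum f U"
  using assms
proof (induction N arbitrary: U)
  case 0
  then show ?case by auto
next
  case (Suc N)
  show ?case
  proof (cases "m = Suc N")
    case True
    then show ?thesis using Suc.prems by auto
  next
    case False
    hence mN: "m \<le> N" using Suc.prems by auto
    have ne: "U \<noteq> {}" using Suc.prems by auto
    have "Min (f ` U) \<in> f ` U" using Min_in[of "f ` U"] Suc.prems ne by auto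
    then obtain u where u0: "u \<in> U" "f u = Min (f ` U)" by auto
    have u: "u \<in> U" "\<forall>x\<in>U. f u \<le> f x" using u0 Suc.prems(1) by auto
    have c: "card (U - {u}) = N" using Suc.prems u by auto
    obtain S where S: "S \<subseteq> U - {u}" "card S = m" "real N * sum f S \<ge> real m * sum f (U - {u})"
      using Suc.IH[of "U - {u}"] Suc.prems c mN by auto
    have sU: "sum f U = f u + sum f (U - {u})" using Suc.prems(1) u(1) by (simp add: sum.remove)
    have "sum (\<lambda>x. f u) U \<le> sum f U" using u(2) by (intro sum_mono) auto
    hence fu: "real (Suc N) * f u \<le> sum f U" using Suc.prems by simp
    have sS: "sum f S \<ge> 0" using S(1) Suc.prems(4) by (intro sum_nonneg) auto
    have sU0: "sum f U \<ge> 0" using Suc.prems(4) by (intro sum_nonneg) auto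
    have "real (Suc N) * sum f S \<ge> real m * sum f U"
    proof (cases "N = 0")
      case True
      then show ?thesis using mN sS by simp
    next
      case False
      have "real N * (real (Suc N) * sum f S) \<ge> real (Suc N) * (real m * sum f (U - {u}))"
        using S(3) by (simp add: mult_left_mono)
      moreover have "real (Suc N) * sum f (U - {u}) \<ge> real N * sum f U"
        using sU fu by (simp add: algebra_simps)
      hence "real m * (real (Suc N) * sum f (U - {u})) \<ge> real m * (real N * sum f U)"
        by (simp add: mult_left_mono)
      ultimately have "real N * (real (Suc N) * sum f S) \<ge> real N * (real m * sum f U)"
        by (simp add: algebra_simps)
      then show ?thesis using False by simp
    qed
    then show ?thesis using S by auto
  qed
qed

fun loa :: "nat \<Rightarrow> nat \<Rightarrow> nat \<Rightarrow> (nat \<Rightarrow> nat) \<Rightarrow> nat \<Rightarrow> (nat \<times> nat \<Rightarrow> answer) list \<Rightarrow> nat" where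
  "loa i b k thr 0 h = 0"
| "loa i b k thr (Suc r) h = (let B = loa i b k thr r h; w = (b+1)^(k - Suc r) in
     B + card {c\<in>{1..b}. (h!r) (i, thr (B + c*w)) \<noteq> Lt} * w)"

lemma loa_append: "r \<le> length h \<Longrightarrow> loa i b k thr r (h @ h') = loa i b k thr r h"
  by (induction r) (auto simp: Let_def nth_append)

definition alg :: "nat \<Rightarrow> nat \<Rightarrow> nat \<Rightarrow> (nat \<Rightarrow> nat) \<Rightarrow> nat list \<Rightarrow> algorithm" where
  "alg i b k thr xs = \<lparr>queries = (\<lambda>h. (\<lambda>c. (i, thr (loa i b k thr (length h) h + c * (b+1)^(k - Suc (length h))))) ` {1..b}),
     answer_of = (\<lambda>h. xs ! loa i b k thr (length h) h)\<rparr>"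

lemma length_history[simp]: "length (history A \<sigma> r) = r"
  by (induction r) (auto simp: Let_def)

lemma digit_arith:
  fixes t w b :: nat
  assumes "w > 0"
  defines "W \<equiv> (b+1) * w"
  shows "card {c\<in>{1..b}. (t div W) * W + c * w \<le> t} = (t mod W) div w"
    and "(t div W) * W + ((t mod W) div w) * w = (t div w) * w"
proof -
  have Wc: "W = w * (b+1)" by (simp add: W_def)
  have e1: "t div W = t div w div (b+1)" unfolding Wc by (rule div_mult2_eq)
  have m: "t mod W = w * (t div w mod (b+1)) + t mod w" unfolding Wc by (rule mod_mult2_eq)
  have e2: "(t mod W) div w = t div w mod (b+1)"
  proof -
    have "t mod w < w" using assms(1) by simp
    hence "(w * (t div w mod (b+1)) + t mod w) div w = t div w mod (b+1)"
      using assms(1) by (simp add: div_add1_eq)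
    thus ?thesis using m by simp
  qed
  have lt: "(t mod W) div w \<le> b"
  proof -
    have "t div w mod (b+1) < b+1" by simp
    thus ?thesis unfolding e2 by linarith
  qed
  have tW: "t div W * W + t mod W = t" by (rule div_mult_mod_eq)
  have c1: "((t div W) * W + c * w \<le> t) = (c * w \<le> t mod W)" for c
    using tW by linarith
  have c2: "(c * w \<le> t mod W) = (c \<le> (t mod W) div w)" for c
    using assms(1) by (simp add: less_eq_div_iff_mult_less_eq)
  have "{c\<in>{1..b}. (t div W) * W + c * w \<le> t} = {1..(t mod W) div w}"
    using lt unfolding c1 c2 by auto
  thus "card {c\<in>{1..b}. (t div W) * W + c * w \<le> t} = (t mod W) div w" by simp
  have "(t div w div (b+1)) * (b+1) + t div w mod (b+1) = t div w" by (rule div_mult_mod_eq)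
  hence "((t div w div (b+1)) * (b+1) + t div w mod (b+1)) * w = (t div w) * w" by simp
  moreover have "(t div W)*W + ((t mod W) div w)*w = (t div w div (b+1)) * (w*(b+1)) + (t div w mod (b+1)) * w"
    by (subst e1, subst e2, simp only: Wc)
  ultimately show "(t div W) * W + ((t mod W) div w) * w = (t div w) * w"
    by (simp add: algebra_simps)
qed
lemma invariant:
  assumes ord: "\<And>j. (\<sigma> i < thr j) = (t < j)"
    and "r \<le> k" and tk: "t < (b+1)^k"
  shows "loa i b k thr r (history (alg i b k thr xs) \<sigma> r) = (t div (b+1)^(k-r)) * (b+1)^(k-r)"
  using assms(2)
proof (induction r)
  case 0
  then show ?case using tk by simp
next
  case (Suc r)
  define H where "H = history (alg i b k thr xs) \<sigma> r"
  define w where "w = (b+1)^(k - Suc r)"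
  have W: "(b+1)^(k-r) = (b+1) * w" unfolding w_def using Suc.prems
    by (metis Suc_diff_Suc Suc_le_lessD power_Suc)
  have w0: "w > 0" by (simp add: w_def)
  define B where "B = loa i b k thr r H"
  have IH: "B = (t div ((b+1)*w)) * ((b+1)*w)" using Suc B_def H_def W by simp
  have hs: "history (alg i b k thr xs) \<sigma> (Suc r) = H @ [round_answers \<sigma> (queries (alg i b k thr xs) H)]"
    by (simp add: H_def Let_def)
  have lH: "length H = r" by (simp add: H_def)
  have q: "queries (alg i b k thr xs) H = (\<lambda>c. (i, thr (B + c * w))) ` {1..b}"
    by (simp add: alg_def lH B_def w_def)
  have mem: "(i, thr (B + c * w)) \<in> queries (alg i b k thr xs) H" if "c \<in> {1..b}" for c
    unfolding q using that by blast
  have set_eq: "{c\<in>{1..b}. round_answers \<sigma> (queries (alg i b k thr xs) H) (i, thr (B + c*w)) \<noteq> Lt}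
      = {c\<in>{1..b}. B + c * w \<le> t}"
  proof (rule Collect_cong)
    fix c
    show "(c \<in> {1..b} \<and> round_answers \<sigma> (queries (alg i b k thr xs) H) (i, thr (B + c*w)) \<noteq> Lt)
        = (c \<in> {1..b} \<and> B + c * w \<le> t)"
    proof (cases "c \<in> {1..b}")
      case True
      have "round_answers \<sigma> (queries (alg i b k thr xs) H) (i, thr (B + c*w)) = cmp (\<sigma> i) (thr (B + c*w))"
        using mem[OF True] unfolding round_answers_def by simp
      moreover have "(cmp (\<sigma> i) (thr (B + c*w)) \<noteq> Lt) = (\<not> \<sigma> i < thr (B + c*w))"
        unfolding cmp_def by simp
      ultimately have "(round_answers \<sigma> (queries (alg i b k thr xs) H) (i, thr (B + c*w)) \<noteq> Lt) = (B + c * w \<le> t)"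
        using ord[of "B + c*w"] by (simp add: not_less)
      then show ?thesis using True by simp
    next
      case False
      then show ?thesis by blast
    qed
  qed
  have L: "loa i b k thr (Suc r) (H @ [a]) = B + card {c\<in>{1..b}. a (i, thr (B + c*w)) \<noteq> Lt} * w" for a
  proof -
    have "(H @ [a]) ! r = a" using lH by (metis nth_append_length)
    thus ?thesis unfolding loa.simps Let_def using loa_append[of r H i b k thr "[a]"] lH
      by (simp add: B_def w_def)
  qed
  have "loa i b k thr (Suc r) (history (alg i b k thr xs) \<sigma> (Suc r)) = B + card {c\<in>{1..b}. B + c * w \<le> t} * w"
    unfolding hs L set_eq ..
  also have "\<dots> = (t div w) * w"
    using digit_arith[where t=t and b=b and w=w, OF w0] IH by simp
  finally show ?case by (simp add: w_def)
qed

theorem proposition6: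
  fixes n i k :: nat and p :: real and D :: "(nat \<Rightarrow> nat) pmf"
  assumes "set_pmf D \<subseteq> {\<sigma>. \<sigma> permutes {1..n}}"
    and "i \<in> {1..n}"
    and "0 \<le> p" "p \<le> 1"
    and "k \<ge> 1"
  shows "\<exists>A :: algorithm.
           (\<forall>\<sigma>. \<sigma> permutes {1..n} \<longrightarrow>
               (\<forall>r<k. finite (round_queries A \<sigma> r))
             \<and> real (num_queries A k \<sigma>) \<le> real k * (real (nat \<lceil>p * real n\<rceil>)) powr (1 / real k))
         \<and> measure_pmf.prob D {\<sigma>. run_output A k \<sigma> = \<sigma> i} \<ge> p"
proof -
  define m where "m = nat \<lceil>p * real n\<rceil>"
  have n1: "n \<ge> 1" using assms(2) by auto
  have "p * real n \<le> real n" using assms(3,4) by (simp add: mult_left_le_one_le)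
  hence "\<lceil>p * real n\<rceil> \<le> int n" by (simp add: ceiling_le_iff)
  hence mn: "m \<le> n" unfolding m_def by (metis nat_int nat_mono)
  have pm: "p * real n \<le> real m" unfolding m_def by (rule real_nat_ceiling_ge)
  define M where "M = map_pmf (\<lambda>\<sigma>. \<sigma> i) D"
  have setM: "set_pmf M \<subseteq> {1..n}"
  proof
    fix v assume "v \<in> set_pmf M"
    then obtain \<sigma> where s: "\<sigma> \<in> set_pmf D" "v = \<sigma> i" unfolding M_def by auto
    hence "\<sigma> permutes {1..n}" using assms(1) by auto
    thus "v \<in> {1..n}" using s(2) assms(2) by (metis permutes_in_image)
  qed
  have sum1: "sum (pmf M) {1..n} = 1" by (rule sum_pmf_eq_1) (use setM in auto)
  obtain S where S: "S \<subseteq> {1..n}" "card S = m" "real n * sum (pmf M) S \<ge> real m * sum (pmf M) {1..n}"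
    using exists_heavy[of "{1..n}" n m "pmf M"] mn by auto
  have finS: "finite S" using S(1) finite_subset by blast
  have "real n * sum (pmf M) S \<ge> real n * p" using S(3) sum1 pm by (simp add: algebra_simps)
  hence pS: "sum (pmf M) S \<ge> p" using n1 by simp
  have probS: "measure_pmf.prob D {\<sigma>. \<sigma> i \<in> S} = sum (pmf M) S"
  proof -
    have "sum (pmf M) S = measure_pmf.prob M S" using finS by (simp add: measure_measure_pmf_finite)
    also have "\<dots> = measure_pmf.prob D ((\<lambda>\<sigma>. \<sigma> i) -` S)" by (simp add: M_def)
    also have "(\<lambda>\<sigma>. \<sigma> i) -` S = {\<sigma>. \<sigma> i \<in> S}" by auto
    finally show ?thesis by simp
  qed
  define xs where "xs = sorted_list_of_set S"
  define thr where "thr j = (if j < length xs then xs ! j else n+1)" for j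
  define b where "b = nat \<lfloor>real m powr (1 / real k)\<rfloor>"
  define A where "A = alg i b k thr xs"
  have lxs: "length xs = m" using S(2) by (simp add: xs_def)
  have sxs: "set xs = S" using finS by (simp add: xs_def)
  have strict: "sorted_wrt (<) xs" unfolding xs_def by (rule strict_sorted_list_of_set)
  have x0: "0 \<le> real m powr (1 / real k)" by simp
  have bm: "real b \<le> real m powr (1 / real k)"
  proof -
    have "real b = real_of_int \<lfloor>real m powr (1 / real k)\<rfloor>" unfolding b_def using x0 by simp
    also have "\<dots> \<le> real m powr (1 / real k)" by (rule of_int_floor_le)
    finally show ?thesis .
  qed
  have mb: "m < (b+1)^k"
  proof (cases "m = 0")
    case True
    then show ?thesis by simp
  next
    case False
    have "real m powr (1 / real k) < real_of_int \<lfloor>real m powr (1 / real k)\<rfloor> + 1" by linarith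
    also have "\<dots> = real (b+1)" unfolding b_def using x0 by simp
    finally have lt: "real m powr (1 / real k) < real (b+1)" .
    have "(real m powr (1 / real k)) ^ k < real (b+1) ^ k"
      using lt x0 assms(5) by (intro power_strict_mono) auto
    moreover have "(real m powr (1 / real k)) ^ k = real m"
      using False assms(5) by (simp add: powr_power)
    ultimately have "real m < real ((b+1)^k)" by simp
    thus ?thesis by linarith
  qed
  have qfin: "finite (queries A h)" for h by (simp add: A_def alg_def)
  have qcard: "card (queries A h) \<le> b" for h
    unfolding A_def alg_def using card_image_le[of "{1..b}"] by simp
  have part1: "\<forall>r<k. finite (round_queries A \<sigma> r)" for \<sigma>
    by (simp add: round_queries_def qfin)
  have part2: "real (num_queries A k \<sigma>) \<le> real k * (real m) powr (1 / real k)" for \<sigma>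
  proof -
    have "num_queries A k \<sigma> \<le> card {..<k} * b" unfolding num_queries_def
      using sum_bounded_above[of "{..<k}" "\<lambda>r. card (round_queries A \<sigma> r)" b]
      by (simp add: round_queries_def qcard)
    hence "real (num_queries A k \<sigma>) \<le> real k * real b" by (metis card_lessThan of_nat_le_iff of_nat_mult)
    also have "\<dots> \<le> real k * (real m) powr (1 / real k)" using bm by (simp add: mult_left_mono)
    finally show ?thesis .
  qed
  have succ: "{\<sigma>. \<sigma> i \<in> S} \<inter> set_pmf D \<subseteq> {\<sigma>. run_output A k \<sigma> = \<sigma> i}"
  proof
    fix \<sigma> assume a: "\<sigma> \<in> {\<sigma>. \<sigma> i \<in> S} \<inter> set_pmf D"
    hence "\<sigma> i \<in> set xs" using sxs by auto
    then obtain t where t: "t < length xs" "xs ! t = \<sigma> i" by (metis in_set_conv_nth)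
    have vn: "\<sigma> i \<le> n" using a S(1) by auto
    have ord: "(\<sigma> i < thr j) = (t < j)" for j
    proof (cases "j < length xs")
      case True
      have "xs ! t < xs ! j \<longleftrightarrow> t < j"
      proof
        assume "xs ! t < xs ! j"
        thus "t < j" using sorted_wrt_nth_less[OF strict, of j t] t(1) True
          by (metis less_asym' linorder_neqE_nat)
      next
        assume "t < j" thus "xs ! t < xs ! j" using sorted_wrt_nth_less[OF strict, of t j] True by simp
      qed
      then show ?thesis using True t by (simp add: thr_def)
    next
      case False
      then show ?thesis using t vn by (simp add: thr_def)
    qed
    have tk: "t < (b+1)^k" using t(1) lxs mb by simp
    have "loa i b k thr k (history A \<sigma> k) = t"
      using invariant[of \<sigma> i thr t k k b xs, OF ord _ tk] by (simp add: A_def)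
    hence "run_output A k \<sigma> = xs ! t"
      by (simp add: run_output_def A_def alg_def)
    thus "\<sigma> \<in> {\<sigma>. run_output A k \<sigma> = \<sigma> i}" using t by simp
  qed
  have "p \<le> measure_pmf.prob D {\<sigma>. \<sigma> i \<in> S}" using pS probS by simp
  also have "\<dots> = measure_pmf.prob D ({\<sigma>. \<sigma> i \<in> S} \<inter> set_pmf D)" by (simp add: measure_Int_set_pmf)
  also have "\<dots> \<le> measure_pmf.prob D {\<sigma>. run_output A k \<sigma> = \<sigma> i}"
    using succ by (intro measure_pmf.finite_measure_mono) auto
  finally have "p \<le> measure_pmf.prob D {\<sigma>. run_output A k \<sigma> = \<sigma> i}" .
  thus ?thesis using part1 part2 unfolding m_def by blast
qed

end
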